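(* Let $n$ and $s$ be integers with $\gcd(s,n)=1$ and let $\mathcal C$ be an $\mathbb F_{q^n}$-subspace of $\mathcal L_{n,q}$ of dimension $k>1$. If $\dim(\mathcal C\cap\mathcal C^{[s]})=k-1$ and $\mathcal C\cap U_1=\{0\}$, then there exists $p(x)\in\mathcal L_{n,q}$ such that \[\mathcal C=\langle p(x),p(x)^{[s]},\ldots,p(x)^{[s(k-1)]}\rangle_{\mathbb F_{q^n}}.\] If moreover $\mathcal C$ contains at least one invertible linearized polynomial, then $p(x)$ is invertible and $\mathcal C$ is equivalent to $\mathcal G_{k,s}$.
   Context: $q$ is a prime power, $[i]:=q^i$. $\mathcal L_{n,q}$ is the $\mathbb F_{q^n}$-vector space of linearized polynomials $f(x)=\sum_{i=0}^{n-1}a_ix^{[i]}$, $a_i\in\mathbb F_{q^n}$, identified with $\mathbb F_q$-linear maps of $\mathbb F_{q^n}$ (so rank, kernel and invertibility refer to these maps; $\circ$ is composition). For $f(x)=\sum_i a_ix^{[i]}$, $f(x)^{[j]}:=x^{[j]}\circ f(x)=\sum_i a_i^{[j]}x^{[(i+j)\bmod n]}$, and $\mathcal C^{[j]}=\{f^{[j]}\colon f\in\mathcal C\}$. $U_1=\{\alpha x+\alpha^{[1]}x^{[1]}+\cdots+\alpha^{[n-1]}x^{[n-1]}\colon\alpha\in\mathbb F_{q^n}\}$. $\mathcal G_{k,s}=\langle x,x^{[s]},\ldots,x^{[s(k-1)]}\rangle_{\mathbb F_{q^n}}$. Two codes $\mathcal C,\mathcal C'\subseteq\mathcal L_{n,q}$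 are equivalent if there are invertible $h,g\in\mathcal L_{n,q}$ and a field automorphism $\sigma$ (acting on coefficients) with $\{h\circ f^\sigma\circ g\colon f\in\mathcal C\}=\mathcal C'$. *)

theory Defs
  imports Complex_Main "HOL-Library.Function_Algebras" "HOL-Computational_Algebra.Primes"
begin

text \<open>The field F_{q^n} is a finite field type 'a with CARD('a) = q^n.
Linearized polynomials are identified with the maps of 'a they induce.\<close>

definition prime_power :: "nat \<Rightarrow> bool" where
  "prime_power q \<longleftrightarrow> (\<exists>p m. prime p \<and> m > 0 \<and> q = p ^ m)"

text \<open>x^[j] = x^(q^j), exponent read modulo n (so negative j allowed).\<close>
definition qp :: "nat \<Rightarrow> nat \<Rightarrow> int \<Rightarrow> 'a::field \<Rightarrow> 'a" where
  "qp q n j x = x ^ (q ^ nat (j mod int n))"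

definition lin_eval :: "nat \<Rightarrow> nat \<Rightarrow> (nat \<Rightarrow> 'a::field) \<Rightarrow> 'a \<Rightarrow> 'a" where
  "lin_eval q n a = (\<lambda>x. \<Sum>i<n. a i * x ^ (q ^ i))"

definition Lnq :: "nat \<Rightarrow> nat \<Rightarrow> ('a::field \<Rightarrow> 'a) set" where
  "Lnq q n = {lin_eval q n a | a. True}"

definition fscale :: "'a::field \<Rightarrow> ('a \<Rightarrow> 'a) \<Rightarrow> ('a \<Rightarrow> 'a)" where
  "fscale c f = (\<lambda>x. c * f x)"

definition fpow :: "nat \<Rightarrow> nat \<Rightarrow> int \<Rightarrow> ('a::field \<Rightarrow> 'a) \<Rightarrow> ('a \<Rightarrow> 'a)" where
  "fpow q n j f = (\<lambda>x. qp q n j (f x))"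

definition Cpow :: "nat \<Rightarrow> nat \<Rightarrow> int \<Rightarrow> ('a::field \<Rightarrow> 'a) set \<Rightarrow> ('a \<Rightarrow> 'a) set" where
  "Cpow q n j C = fpow q n j ` C"

definition U1 :: "nat \<Rightarrow> nat \<Rightarrow> ('a::field \<Rightarrow> 'a) set" where
  "U1 q n = {lin_eval q n (\<lambda>i. \<alpha> ^ (q ^ i)) | \<alpha>. True}"

definition Gks :: "nat \<Rightarrow> nat \<Rightarrow> nat \<Rightarrow> int \<Rightarrow> ('a::field \<Rightarrow> 'a) set" where
  "Gks q n k s = module.span fscale {(\<lambda>x. qp q n (s * int j) x) | j. j < k}"

definition field_aut :: "('a::field \<Rightarrow> 'a) \<Rightarrow> bool" where
  "field_aut \<sigma> \<longleftrightarrow> bij \<sigma> \<and> (\<forall>x y. \<sigma> (x + y) = \<sigma> x + \<sigma> y) \<and>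
     (\<forall>x y. \<sigma> (x * y) = \<sigma> x * \<sigma> y) \<and> \<sigma> 1 = 1"

text \<open>Equivalence: C' = {h o f^sigma o g | f in C}, h,g invertible linearized,
 sigma acting on coefficients.\<close>
definition code_equiv :: "nat \<Rightarrow> nat \<Rightarrow> ('a::field \<Rightarrow> 'a) set \<Rightarrow> ('a \<Rightarrow> 'a) set \<Rightarrow> bool" where
  "code_equiv q n C C' \<longleftrightarrow>
    (\<exists>h g \<sigma>. h \<in> Lnq q n \<and> g \<in> Lnq q n \<and> bij h \<and> bij g \<and> field_aut \<sigma> \<and>
       C' = {h \<circ> lin_eval q n (\<sigma> \<circ> a) \<circ> g | a. lin_eval q n a \<in> C})"

end

theory Submission
  imports Defs "HOL-Number_Theory.Cong" "HOL-Computational_Algebra.Polynomial"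
begin



lemma fscale_vs: "vector_space (fscale :: 'a::field \<Rightarrow> ('a \<Rightarrow> 'a) \<Rightarrow> _)"
  by unfold_locales (auto simp: fscale_def fun_eq_iff algebra_simps)

interpretation fv: vector_space "fscale :: 'a::field \<Rightarrow> ('a \<Rightarrow> 'a) \<Rightarrow> _"
  by (rule fscale_vs)

lemma finite_fun_basis:
  "\<exists>B. finite B \<and> fv.independent B \<and> fv.span B = (UNIV :: ('a::{finite,field} \<Rightarrow> 'a) set)"
proof -
  obtain B where "B \<subseteq> (UNIV :: ('a \<Rightarrow> 'a) set)" "fv.independent B" "UNIV \<subseteq> fv.span B"
    using fv.maximal_independent_subset[of UNIV] by blast
  then show ?thesis by (intro exI[of _ B]) auto
qed

definition fbasis :: "('a::{finite,field} \<Rightarrow> 'a) set" where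
  "fbasis = (SOME B. finite B \<and> fv.independent B \<and> fv.span B = UNIV)"

interpretation ffv: finite_dimensional_vector_space "fscale :: 'a::{finite,field} \<Rightarrow> ('a \<Rightarrow> 'a) \<Rightarrow> _" fbasis
proof -
  have "finite (fbasis::('a \<Rightarrow> 'a) set) \<and> fv.independent (fbasis::('a \<Rightarrow> 'a) set) \<and> fv.span (fbasis::('a \<Rightarrow> 'a) set) = UNIV"
    unfolding fbasis_def by (rule someI_ex[OF finite_fun_basis])
  then show "finite_dimensional_vector_space (fscale :: 'a \<Rightarrow> ('a \<Rightarrow> 'a) \<Rightarrow> _) fbasis"
    by unfold_locales auto
qed

lemma "vector_space.dim fscale (C :: ('a::{finite,field} \<Rightarrow> 'a) set) = fv.dim C" ..

lemma power_card_same: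
  fixes x :: "'a :: {finite,field}"
  shows   "x ^ card (UNIV :: 'a set) = x"
proof (cases "x = 0")
  case False
  have "x * (\<Prod>y\<in>UNIV-{0}. x * y) = x * x ^ (card (UNIV :: 'a set) - 1) * \<Prod>(UNIV-{0})"
    by (simp add: prod.distrib mult_ac)
  also have "x * x ^ (card (UNIV :: 'a set) - 1) = x ^ Suc (card (UNIV :: 'a set) - 1)"
    by (subst power_Suc) auto
  also have "Suc (card (UNIV :: 'a set) - 1) = card (UNIV :: 'a set)"
    using finite_UNIV_card_ge_0[where ?'a = 'a] by simp
  also have "(\<Prod>y\<in>UNIV-{0}. x * y) = (\<Prod>y\<in>UNIV-{0}. y)"
    by (rule prod.reindex_bij_witness[of _ "\<lambda>y. y / x" "\<lambda>y. x * y"]) (use False in auto)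
  finally show ?thesis
    by simp
qed (use finite_UNIV_card_ge_0[where ?'a = 'a] in auto)

lemma of_nat_card_zero: "of_nat (card (UNIV :: 'a::{finite,field} set)) = (0::'a)"
proof -
  have "(\<Sum>x\<in>UNIV. x + 1) = (\<Sum>x\<in>(UNIV::'a set). x)"
    by (rule sum.reindex_bij_witness[of _ "\<lambda>y. y - 1" "\<lambda>y. y + 1"]) auto
  then show ?thesis by (simp add: sum.distrib)
qed




locale ffq =
  fixes q n :: nat and ty :: "'a::{finite,field} itself"
  assumes pp: "prime_power q" and n1: "n \<ge> 1" and cardq: "card (UNIV :: 'a set) = q ^ n"
begin

lemma q_ge2: "q \<ge> 2"
  using pp unfolding prime_power_def
  by (metis one_less_power prime_gt_1_nat Suc_leI one_add_one plus_1_eq_Suc)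

lemma char_q: "prime CHAR('a) \<and> (\<exists>m. q = CHAR('a) ^ m)"
proof -
  obtain p m where p: "prime p" "m > 0" "q = p ^ m" using pp unfolding prime_power_def by blast
  have pos: "CHAR('a) > 0" by (rule finite_imp_CHAR_pos) simp
  have pc: "prime CHAR('a)" using prime_CHAR_semidom[OF pos] .
  have "of_nat (p ^ (m * n)) = (0::'a)"
    using of_nat_card_zero[where 'a='a] cardq p by (simp add: power_mult)
  then have "CHAR('a) dvd p ^ (m * n)" using of_nat_eq_0_iff_char_dvd by blast
  then have "CHAR('a) dvd p" using pc prime_dvd_power by blast
  then have "CHAR('a) = p" using pc p by (simp add: primes_dvd_imp_eq)
  then show ?thesis using pc p by auto
qed

lemma frob_add: "((x::'a) + y) ^ (q ^ j) = x ^ (q ^ j) + y ^ (q ^ j)"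
proof -
  obtain m where m: "q = CHAR('a) ^ m" using char_q by blast
  show ?thesis
    by (rule freshmans_dream'[where n="m * j"]) (use char_q m in \<open>simp_all add: power_mult\<close>)
qed

lemma frob_sum: "(sum (f :: 'b \<Rightarrow> 'a) A) ^ (q ^ j) = (\<Sum>i\<in>A. f i ^ (q ^ j))"
proof -
  obtain m where m: "q = CHAR('a) ^ m" using char_q by blast
  show ?thesis
    by (rule freshmans_dream_sum'[where n="m * j"]) (use char_q m in \<open>simp_all add: power_mult\<close>)
qed

lemma pow_qn: "(x::'a) ^ (q ^ n) = x"
  using power_card_same[of x] cardq by simp

lemma pow_mod: "(x::'a) ^ (q ^ j) = x ^ (q ^ (j mod n))"
proof (induction j rule: less_induct)
  case (less j)
  show ?case
  proof (cases "j < n")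
    case True then show ?thesis by simp
  next
    case False
    then have j: "j = (j - n) + n" by simp
    have "x ^ (q ^ j) = (x ^ (q ^ n)) ^ (q ^ (j - n))"
      by (subst j) (simp add: power_add power_mult mult.commute)
    also have "\<dots> = x ^ (q ^ (j - n))" by (simp add: pow_qn)
    also have "\<dots> = x ^ (q ^ ((j - n) mod n))" using less n1 False by simp
    also have "(j - n) mod n = j mod n" using False by (simp add: mod_if)
    finally show ?thesis .
  qed
qed

lemma qp_alt: "qp q n j x = x ^ (q ^ nat (j mod int n))" by (simp add: qp_def)

lemma nat_mod_add: "(nat (a mod int n) + nat (b mod int n)) mod n = nat ((a + b) mod int n)"
proof -
  have "int ((nat (a mod int n) + nat (b mod int n)) mod n) = (a mod int n + b mod int n) mod int n"
    using n1 by (simp add: zmod_int)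
  also have "\<dots> = (a + b) mod int n" by (simp add: mod_add_eq)
  finally show ?thesis using n1 by (metis nat_int)
qed

lemma qp_comp: "qp q n a (qp q n b (x::'a)) = qp q n (a + b) x"
proof -
  have "qp q n a (qp q n b x) = x ^ (q ^ (nat (b mod int n) + nat (a mod int n)))"
    by (simp add: qp_def power_add power_mult)
  also have "\<dots> = x ^ (q ^ ((nat (a mod int n) + nat (b mod int n)) mod n))"
    by (subst pow_mod) (simp add: add.commute)
  also have "\<dots> = qp q n (a + b) x" by (simp add: qp_def nat_mod_add)
  finally show ?thesis .
qed

lemma qp_0 [simp]: "qp q n 0 (x::'a) = x" by (simp add: qp_def)
lemma qp_zero [simp]: "qp q n j (0::'a) = 0" using q_ge2 by (simp add: qp_def)
lemma qp_add: "qp q n j ((x::'a) + y) = qp q n j x + qp q n j y" by (simp add: qp_def frob_add)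
lemma qp_mult: "qp q n j ((x::'a) * y) = qp q n j x * qp q n j y" by (simp add: qp_def power_mult_distrib)
lemma qp_modeq: "j mod int n = j' mod int n \<Longrightarrow> qp q n j (x::'a) = qp q n j' x" by (simp add: qp_def)
lemma qp_nat: "i < n \<Longrightarrow> qp q n (int i) (x::'a) = x ^ (q ^ i)"
  by (simp add: qp_def)

end




lemma semilin_span_image:
  fixes L :: "('a::field \<Rightarrow> 'a) \<Rightarrow> ('a \<Rightarrow> 'a)" and \<sigma> :: "'a \<Rightarrow> 'a"
  assumes add: "\<And>f g. L (f + g) = L f + L g"
    and sc: "\<And>c f. L (fscale c f) = fscale (\<sigma> c) (L f)" and sj: "surj \<sigma>"
  shows "L ` fv.span S = fv.span (L ` S)"
proof
  have L0: "L 0 = 0" using add[of 0 0] by simp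
  show "L ` fv.span S \<subseteq> fv.span (L ` S)"
  proof
    fix y assume "y \<in> L ` fv.span S"
    then obtain x where x: "x \<in> fv.span S" "y = L x" by blast
    have "L x \<in> fv.span (L ` S)" using x(1)
    proof (induction rule: fv.span_induct_alt)
      case base then show ?case by (metis L0 fv.span_zero)
    next
      case (step c x y)
      have "L (fscale c x + y) = fscale (\<sigma> c) (L x) + L y" by (simp only: add sc)
      moreover have "L x \<in> fv.span (L ` S)" using step by (simp add: fv.span_base)
      ultimately show ?case using step by (metis fv.span_add fv.span_scale)
    qed
    then show "y \<in> fv.span (L ` S)" using x by simp
  qed
  show "fv.span (L ` S) \<subseteq> L ` fv.span S"
  proof (rule fv.span_minimal)
    show "L ` S \<subseteq> L ` fv.span S" using fv.span_base by blast
    show "fv.subspace (L ` fv.span S)"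
      unfolding fv.subspace_def
    proof (intro conjI ballI allI)
      show "0 \<in> L ` fv.span S" using L0 fv.span_zero by (metis image_eqI)
      fix a b assume "a \<in> L ` fv.span S" "b \<in> L ` fv.span S"
      then show "a + b \<in> L ` fv.span S"
        by (auto simp: add[symmetric] intro!: imageI fv.span_add)
    next
      fix c a assume "a \<in> L ` fv.span S"
      then obtain x where x: "x \<in> fv.span S" "a = L x" by blast
      obtain c' where c': "c = \<sigma> c'" using sj by (metis surjD)
      have "fscale c a = L (fscale c' x)" using x c' sc by simp
      then show "fscale c a \<in> L ` fv.span S" using x fv.span_scale by blast
    qed
  qed
qed

lemma semilin_indep:
  fixes L :: "('a::field \<Rightarrow> 'a) \<Rightarrow> ('a \<Rightarrow> 'a)" and \<sigma> :: "'a \<Rightarrow> 'a"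
  assumes add: "\<And>f g. L (f + g) = L f + L g"
    and sc: "\<And>c f. L (fscale c f) = fscale (\<sigma> c) (L f)" and sj: "surj \<sigma>" and inj: "inj L"
    and ind: "fv.independent S"
  shows "fv.independent (L ` S)"
proof
  assume "fv.dependent (L ` S)"
  then obtain a where a: "a \<in> S" "L a \<in> fv.span (L ` S - {L a})"
    unfolding fv.dependent_def by blast
  have "L ` S - {L a} = L ` (S - {a})" using inj by (auto simp: inj_eq)
  then have "L a \<in> L ` fv.span (S - {a})"
    using a semilin_span_image[OF add sc sj] by simp
  then have "a \<in> fv.span (S - {a})" using inj by (auto simp: inj_eq)
  then show False using ind a unfolding fv.dependent_def by blast
qed

lemma semilin_dim:
  fixes L :: "('a::{finite,field} \<Rightarrow> 'a) \<Rightarrow> ('a \<Rightarrow> 'a)" and \<sigma> :: "'a \<Rightarrow> 'a"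
  assumes add: "\<And>f g. L (f + g) = L f + L g"
    and sc: "\<And>c f. L (fscale c f) = fscale (\<sigma> c) (L f)" and sj: "surj \<sigma>" and inj: "inj L"
  shows "fv.dim (L ` V) = fv.dim V"
proof -
  obtain B where B: "B \<subseteq> V" "fv.independent B" "V \<subseteq> fv.span B" "card B = fv.dim V"
    using fv.basis_exists by blast
  show ?thesis
  proof (rule fv.dim_unique)
    show "L ` B \<subseteq> L ` V" using B by blast
    show "L ` V \<subseteq> fv.span (L ` B)" using B semilin_span_image[OF add sc sj] by blast
    show "fv.independent (L ` B)" using semilin_indep[OF add sc sj inj B(2)] .
    show "card (L ` B) = fv.dim V" using B inj by (simp add: card_image inj_on_subset)
  qed
qed

context ffq
begin

lemma fpow_apply: "fpow q n j f x = qp q n j (f x)" by (simp add: fpow_def)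

lemma fpow_add: "fpow q n j (f + g) = fpow q n j f + fpow q n j (g :: 'a \<Rightarrow> 'a)"
  by (simp add: fpow_def fun_eq_iff qp_add)

lemma fpow_scale: "fpow q n j (fscale c f) = fscale (qp q n j c) (fpow q n j (f :: 'a \<Rightarrow> 'a))"
  by (simp add: fpow_def fscale_def fun_eq_iff qp_mult)

lemma fpow_comp: "fpow q n a (fpow q n b (f :: 'a \<Rightarrow> 'a)) = fpow q n (a + b) f"
  by (simp add: fpow_def fun_eq_iff qp_comp)

lemma fpow_0 [simp]: "fpow q n 0 (f :: 'a \<Rightarrow> 'a) = f"
  by (simp add: fpow_def)

lemma fpow_zero [simp]: "fpow q n j (0 :: 'a \<Rightarrow> 'a) = 0"
  by (simp add: fpow_def fun_eq_iff)

lemma qp_surj: "surj (qp q n j :: 'a \<Rightarrow> 'a)"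
proof (rule surjI)
  fix x :: 'a show "qp q n j (qp q n (- j) x) = x" by (simp add: qp_comp)
qed

lemma fpow_inj: "inj (fpow q n j :: ('a \<Rightarrow> 'a) \<Rightarrow> _)"
proof (rule inj_on_inverseI)
  fix f :: "'a \<Rightarrow> 'a" show "fpow q n (-j) (fpow q n j f) = f" by (simp add: fpow_comp)
qed

lemma fpow_span: "fpow q n j ` fv.span S = fv.span (fpow q n j ` (S :: ('a \<Rightarrow> 'a) set))"
  by (rule semilin_span_image[OF fpow_add fpow_scale qp_surj])

lemma fpow_dim: "fv.dim (Cpow q n j (V :: ('a \<Rightarrow> 'a) set)) = fv.dim V"
  unfolding Cpow_def by (rule semilin_dim[OF fpow_add fpow_scale qp_surj fpow_inj])

lemma Cpow_subspace: "fv.subspace V \<Longrightarrow> fv.subspace (Cpow q n j (V :: ('a \<Rightarrow> 'a) set))"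
  unfolding Cpow_def by (metis fpow_span fv.span_eq_iff fv.subspace_span)

end




lemma fun_sum_apply: "(sum F A) x = (\<Sum>a\<in>A. F a x :: 'c::comm_monoid_add)"
  by (induction A rule: infinite_finite_induct) auto

lemma cyc_sum: "(\<Sum>i<n. g (Suc i mod n)) = (\<Sum>i<n. (g i :: 'c::comm_monoid_add))"
proof (cases n)
  case 0 then show ?thesis by simp
next
  case (Suc m)
  have "(\<Sum>i<Suc m. g (Suc i mod Suc m)) = (\<Sum>i<m. g (Suc i mod Suc m)) + g 0" by simp
  also have "(\<Sum>i<m. g (Suc i mod Suc m)) = (\<Sum>i<m. g (Suc i))" by (rule sum.cong) auto
  also have "(\<Sum>i<m. g (Suc i)) + g 0 = (\<Sum>i<Suc m. g i)" by (metis sum.lessThan_Suc_shift add.commute)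
  finally show ?thesis using Suc by simp
qed

context ffq
begin

definition tr :: "'a \<Rightarrow> 'a" where "tr z = (\<Sum>i<n. z ^ (q ^ i))"

lemma lin_zero:
  assumes "\<forall>x::'a. (\<Sum>i<n. b i * x ^ (q ^ i)) = 0"
  shows "\<forall>i<n. b i = 0"
proof -
  define P where "P = (\<Sum>i<n. monom (b i) (q ^ i))"
  have polyP: "poly P x = (\<Sum>i<n. b i * x ^ (q ^ i))" for x
    by (simp add: P_def poly_sum poly_monom)
  have coeffP: "coeff P k = (\<Sum>i<n. if q ^ i = k then b i else 0)" for k
    by (simp add: P_def coeff_sum coeff_monom)
  have q2: "q \<ge> 2" by (rule q_ge2)
  have "P = 0"
  proof (rule ccontr)
    assume "P \<noteq> 0"
    then have "card {x. poly P x = 0} \<le> degree P" by (rule card_poly_roots_bound)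
    moreover have "{x. poly P x = 0} = UNIV" using assms polyP by auto
    moreover have "degree P \<le> q ^ (n - 1)"
    proof (rule degree_le, intro allI impI)
      fix k assume k: "q ^ (n - 1) < k"
      have "q ^ i \<noteq> k" if "i < n" for i
      proof -
        have "q ^ i \<le> q ^ (n - 1)" using that q2 by (intro power_increasing) auto
        then show ?thesis using k by simp
      qed
      then show "coeff P k = 0" by (simp add: coeffP)
    qed
    moreover have "q ^ (n - 1) < q ^ n" using q2 n1 by (intro power_strict_increasing) auto
    ultimately show False using cardq by simp
  qed
  show ?thesis
  proof (intro allI impI)
    fix i assume i: "i < n"
    have "coeff P (q ^ i) = b i"
      using i q2 by (simp add: coeffP power_inject_exp)
    then show "b i = 0" using \<open>P = 0\<close> by simp
  qed
qed

lemma tr_frob: "(tr z) ^ q = tr z"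
proof -
  have "(tr z) ^ q = (tr z) ^ (q ^ 1)" by simp
  also have "\<dots> = (\<Sum>i<n. z ^ (q ^ Suc i))" unfolding tr_def frob_sum
    by (simp add: power_mult[symmetric] mult.commute)
  also have "\<dots> = (\<Sum>i<n. z ^ (q ^ (Suc i mod n)))" by (subst pow_mod) simp
  also have "\<dots> = tr z" unfolding tr_def by (rule cyc_sum[where g="\<lambda>i. z ^ (q ^ i)"])
  finally show ?thesis .
qed

lemma tr_nonzero: "\<exists>z. tr z \<noteq> 0"
proof (rule ccontr)
  assume "\<not> ?thesis"
  then have "\<forall>x::'a. (\<Sum>i<n. 1 * x ^ (q ^ i)) = 0" by (simp add: tr_def)
  from lin_zero[OF this] n1 show False by auto
qed


end




context ffq
begin

lemma U1_char:
  assumes f: "f \<in> Lnq q n" and fq: "\<forall>x. (f x) ^ q = (f x :: 'a)"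
  shows "f \<in> U1 q n"
proof -
  obtain a where a: "f = lin_eval q n a" using f unfolding Lnq_def by blast
  define pr where "pr r = (if r = 0 then n - 1 else r - 1)" for r
  have pr: "pr (Suc i mod n) = i" if "i < n" for i
  proof (cases "Suc i < n")
    case True then have "Suc i mod n = Suc i" by simp
    then show ?thesis by (simp add: pr_def)
  next
    case False then have "Suc i = n" using that by simp
    then have "Suc i mod n = 0" by simp
    then show ?thesis using \<open>Suc i = n\<close> by (simp add: pr_def)
  qed
  have "\<forall>x::'a. (\<Sum>r<n. (a (pr r) ^ q - a r) * x ^ (q ^ r)) = 0"
  proof
    fix x :: 'a
    have "(f x) ^ q = (f x) ^ (q ^ 1)" by simp
    also have "\<dots> = (\<Sum>i<n. a i ^ q * x ^ (q ^ Suc i))"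
      unfolding a lin_eval_def frob_sum
      by (simp add: power_mult_distrib power_mult[symmetric] mult.commute)
    also have "\<dots> = (\<Sum>i<n. a (pr (Suc i mod n)) ^ q * x ^ (q ^ (Suc i mod n)))"
      apply (rule sum.cong[OF refl])
      subgoal for i
      proof -
        assume i: "i \<in> {..<n}"
        have e: "x ^ (q ^ Suc i) = x ^ (q ^ (Suc i mod n))" by (rule pow_mod)
        show ?thesis using i by (simp only: pr e lessThan_iff)
      qed
      done
    also have "\<dots> = (\<Sum>r<n. a (pr r) ^ q * x ^ (q ^ r))"
      by (rule cyc_sum[where g="\<lambda>r. a (pr r) ^ q * x ^ (q ^ r)"])
    finally have e1: "(f x) ^ q = (\<Sum>r<n. a (pr r) ^ q * x ^ (q ^ r))" .
    have e2: "(f x) ^ q = f x" using fq by blast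
    have e3: "f x = (\<Sum>r<n. a r * x ^ (q ^ r))" unfolding a lin_eval_def by simp
    have "(\<Sum>r<n. a (pr r) ^ q * x ^ (q ^ r)) = (\<Sum>r<n. a r * x ^ (q ^ r))"
      by (metis e1 e2 e3)
    then show "(\<Sum>r<n. (a (pr r) ^ q - a r) * x ^ (q ^ r)) = 0"
      by (simp add: algebra_simps sum_subtractf)
  qed
  from lin_zero[OF this] have rec: "a r = a (pr r) ^ q" if "r < n" for r using that by auto
  have ar: "a r = a 0 ^ (q ^ r)" if "r < n" for r
    using that
  proof (induction r)
    case 0 then show ?case by simp
  next
    case (Suc r)
    have "pr (Suc r) = r" by (simp add: pr_def)
    then show ?case using rec[OF Suc.prems] Suc by (simp add: power_mult[symmetric] mult.commute)
  qed
  have "f = lin_eval q n (\<lambda>i. a 0 ^ (q ^ i))"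
    unfolding a lin_eval_def
    apply (rule ext, rule sum.cong[OF refl])
    subgoal for x i using ar[of i] by simp
    done
  then show ?thesis unfolding U1_def by blast
qed

lemma no_fixed:
  assumes CL: "C \<subseteq> Lnq q n" and CU: "C \<inter> U1 q n = {0}"
    and W: "fv.subspace W" "W \<subseteq> C" and w: "w \<in> W" "w \<noteq> (0 :: 'a \<Rightarrow> 'a)"
    and cl: "\<forall>v\<in>W. fpow q n t v \<in> W" and g: "gcd t (int n) = 1"
  shows False
proof -
  obtain u where u: "[t * u = 1] (mod int n)"
    using cong_solve_coprime_int[of t "int n"] g by (auto simp: coprime_iff_gcd_eq_1)
  have clt: "\<forall>v\<in>W. fpow q n (t * int i) v \<in> W" for i
  proof (induction i)
    case 0 then show ?case by simp
  next
    case (Suc i)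
    have "fpow q n (t * int (Suc i)) v = fpow q n t (fpow q n (t * int i) v)" for v :: "'a \<Rightarrow> 'a"
      by (simp add: fpow_comp algebra_simps)
    then show ?case using Suc cl by simp
  qed
  define i where "i = nat (u mod int n)"
  have "(t * int i) mod int n = 1 mod int n"
    using u n1 by (simp add: i_def cong_def mod_mult_right_eq)
  then have "fpow q n 1 v = fpow q n (t * int i) v" for v :: "'a \<Rightarrow> 'a"
    by (simp add: fpow_def fun_eq_iff qp_def)
  then have cl1: "\<forall>v\<in>W. fpow q n 1 v \<in> W" using clt by simp
  have clj: "\<forall>v\<in>W. fpow q n (int j) v \<in> W" for j
  proof (induction j)
    case 0 then show ?case by simp
  next
    case (Suc j)
    have "fpow q n (int (Suc j)) v = fpow q n 1 (fpow q n (int j) v)" for v :: "'a \<Rightarrow> 'a"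
      by (simp add: fpow_comp algebra_simps)
    then show ?case using Suc cl1 by simp
  qed
  obtain x0 where x0: "w x0 \<noteq> 0" using w by (auto simp: fun_eq_iff)
  obtain z where z: "tr z \<noteq> 0" using tr_nonzero by blast
  define c where "c = z / w x0"
  define T where "T = (\<Sum>j<n. fpow q n (int j) (fscale c w))"
  have cw: "fscale c w \<in> W" using W(1) w(1) unfolding fv.subspace_def by blast
  have TW: "T \<in> W" unfolding T_def
    by (rule fv.subspace_sum[OF W(1)]) (use clj cw in blast)
  have Tx: "T x = tr (c * w x)" for x
    unfolding T_def fun_sum_apply tr_def
    by (rule sum.cong) (simp_all add: fpow_def fscale_def qp_nat)
  have "T \<in> U1 q n"
    by (rule U1_char) (use TW W CL Tx tr_frob in auto)
  then have "T = 0" using TW W CU by blast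
  then have "T x0 = 0" by simp
  moreover have "T x0 = tr z" using x0 by (simp add: Tx c_def)
  ultimately show False using z by simp
qed

end




lemma bij_funpow_id:
  fixes p :: "'a::finite \<Rightarrow> 'a"
  assumes "bij p"
  shows "\<exists>N>0. p ^^ N = id"
proof -
  have "finite (range (\<lambda>k::nat. p ^^ k))" by simp
  then have "\<not> inj (\<lambda>k::nat. p ^^ k)" using finite_imageD infinite_UNIV_nat by blast
  then obtain a b :: nat where ab: "a \<noteq> b" "p ^^ a = p ^^ b" unfolding inj_def by blast
  then obtain a b :: nat where ab: "a < b" "p ^^ a = p ^^ b"
    by (metis linorder_neqE_nat)
  have injp: "inj (p ^^ a)" using assms by (simp add: bij_is_inj inj_fn)
  have "p ^^ b = p ^^ a \<circ> p ^^ (b - a)" using ab by (metis funpow_add le_add_diff_inverse less_imp_le)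
  then have "p ^^ a \<circ> p ^^ (b - a) = p ^^ a \<circ> id" using ab by simp
  then have "p ^^ (b - a) = id"
    using injp by (auto simp: fun_eq_iff inj_eq)
  then show ?thesis using ab by (intro exI[of _ "b - a"]) auto
qed

context ffq
begin

lemma Lnq_mono: "(\<lambda>x::'a. c * x ^ (q ^ m)) \<in> Lnq q n"
proof -
  have "lin_eval q n (\<lambda>i. if i = m mod n then c else 0) = (\<lambda>x::'a. c * x ^ (q ^ m))"
  proof
    fix x :: 'a
    have "lin_eval q n (\<lambda>i. if i = m mod n then c else 0) x = c * x ^ (q ^ (m mod n))"
    proof -
      have "lin_eval q n (\<lambda>i. if i = m mod n then c else 0) x = (\<Sum>i<n. if i = m mod n then c * x ^ (q ^ i) else 0)"
        unfolding lin_eval_def by (rule sum.cong) auto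
      also have "\<dots> = c * x ^ (q ^ (m mod n))" using n1 by (subst sum.delta) auto
      finally show ?thesis .
    qed
    also have "\<dots> = c * x ^ (q ^ m)" by (simp add: pow_mod[of x m])
    finally show "lin_eval q n (\<lambda>i. if i = m mod n then c else 0) x = c * x ^ (q ^ m)" .
  qed
  then show ?thesis unfolding Lnq_def
    by (intro CollectI exI[of _ "\<lambda>i. if i = m mod n then c else 0"]) simp
qed

lemma Lnq_add: "f \<in> Lnq q n \<Longrightarrow> g \<in> Lnq q n \<Longrightarrow> f + (g :: 'a \<Rightarrow> 'a) \<in> Lnq q n"
proof -
  assume "f \<in> Lnq q n" "g \<in> Lnq q n"
  then obtain a b where ab: "f = lin_eval q n a" "g = lin_eval q n b" unfolding Lnq_def by blast
  have "f + g = lin_eval q n (\<lambda>i. a i + b i)"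
    unfolding ab lin_eval_def by (simp add: fun_eq_iff sum.distrib distrib_right)
  then show ?thesis unfolding Lnq_def by blast
qed

lemma Lnq_0: "(0 :: 'a \<Rightarrow> 'a) \<in> Lnq q n"
proof -
  have "(0 :: 'a \<Rightarrow> 'a) = lin_eval q n (\<lambda>i. 0)" by (simp add: lin_eval_def fun_eq_iff)
  then show ?thesis unfolding Lnq_def by blast
qed

lemma Lnq_sum: "finite A \<Longrightarrow> (\<And>i. i \<in> A \<Longrightarrow> F i \<in> Lnq q n) \<Longrightarrow> sum F A \<in> (Lnq q n :: ('a \<Rightarrow> 'a) set)"
  by (induction A rule: finite_induct) (auto intro: Lnq_0 Lnq_add)

lemma Lnq_comp: "f \<in> Lnq q n \<Longrightarrow> g \<in> Lnq q n \<Longrightarrow> f \<circ> (g :: 'a \<Rightarrow> 'a) \<in> Lnq q n"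
proof -
  assume "f \<in> Lnq q n" "g \<in> Lnq q n"
  then obtain a b where ab: "f = lin_eval q n a" "g = lin_eval q n b" unfolding Lnq_def by blast
  have "f \<circ> g = (\<Sum>i<n. \<Sum>j<n. (\<lambda>x. (a i * b j ^ (q ^ i)) * x ^ (q ^ (j + i))))"
  proof
    fix x :: 'a
    have "(f \<circ> g) x = (\<Sum>i<n. a i * (\<Sum>j<n. b j * x ^ (q ^ j)) ^ (q ^ i))"
      unfolding ab lin_eval_def by simp
    also have "\<dots> = (\<Sum>i<n. \<Sum>j<n. (a i * b j ^ (q ^ i)) * x ^ (q ^ (j + i)))"
      by (simp add: frob_sum sum_distrib_left power_mult_distrib power_mult[symmetric]
          power_add mult.assoc)
    finally show "(f \<circ> g) x = (\<Sum>i<n. \<Sum>j<n. (\<lambda>x. (a i * b j ^ (q ^ i)) * x ^ (q ^ (j + i)))) x"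
      by (simp add: fun_sum_apply)
  qed
  also have "\<dots> \<in> Lnq q n"
    by (intro Lnq_sum Lnq_mono) auto
  finally show ?thesis .
qed

lemma Lnq_id: "(id :: 'a \<Rightarrow> 'a) \<in> Lnq q n"
  using Lnq_mono[of 1 0] by (simp add: id_def)

lemma Lnq_funpow: "p \<in> Lnq q n \<Longrightarrow> p ^^ N \<in> (Lnq q n :: ('a \<Rightarrow> 'a) set)"
  by (induction N) (auto intro: Lnq_id Lnq_comp)

lemma Lnq_inv: "p \<in> Lnq q n \<Longrightarrow> bij (p :: 'a \<Rightarrow> 'a) \<Longrightarrow> inv p \<in> Lnq q n"
proof -
  assume p: "p \<in> Lnq q n" "bij p"
  obtain N where N: "N > 0" "p ^^ N = id" using bij_funpow_id[OF p(2)] by blast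
  have e1: "p \<circ> p ^^ (N - 1) = id" using N by (metis Suc_pred' funpow.simps(2))
  have e2: "p ^^ (N - 1) \<circ> p = id" using N by (metis Suc_pred' funpow_Suc_right)
  have "inv p = p ^^ (N - 1)" by (rule inv_unique_comp[OF e1 e2])
  then show ?thesis using Lnq_funpow[OF p(1)] by simp
qed

end




theorem lemma3p5:
  fixes q n k :: nat and s :: int and C :: "('a::{finite,field} \<Rightarrow> 'a) set"
  assumes "prime_power q" and "n \<ge> 1" and "card (UNIV :: 'a set) = q ^ n"
    and "gcd s (int n) = 1"
    and "C \<subseteq> Lnq q n" and "module.subspace fscale C"
    and "vector_space.dim fscale C = k" and "k > 1"
    and "vector_space.dim fscale (C \<inter> Cpow q n s C) = k - 1"
    and "C \<inter> U1 q n = {0}"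
  shows "\<exists>p \<in> Lnq q n.
           C = module.span fscale {fpow q n (s * int j) p | j. j < k} \<and>
           ((\<exists>f \<in> C. bij f) \<longrightarrow> bij p \<and> code_equiv q n C (Gks q n k s))"
proof -
  interpret ffq q n "TYPE('a)" using assms(1-3) by unfold_locales
  have CL: "C \<subseteq> Lnq q n" and Csub: "fv.subspace C" and dimC: "fv.dim C = k" and k1: "k > 1"
    and dim1: "fv.dim (C \<inter> Cpow q n s C) = k - 1" and CU: "C \<inter> U1 q n = {0}"
    and gs: "gcd s (int n) = 1"
    using assms(5) assms(6) assms(7) assms(8) assms(9) assms(10) assms(4) by simp_all
  define Cs where "Cs = rec_nat C (\<lambda>_ V. V \<inter> Cpow q n s V)"
  have Cs0: "Cs 0 = C" by (simp add: Cs_def)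
  have CsS: "Cs (Suc i) = Cs i \<inter> Cpow q n s (Cs i)" for i by (simp add: Cs_def)
  have Cs_sub: "fv.subspace (Cs i)" for i
    by (induction i) (simp_all add: Cs0 CsS Csub fv.subspace_inter Cpow_subspace)
  have Cs_C: "Cs i \<subseteq> C" for i
    by (induction i) (auto simp: Cs0 CsS)
  have Cs_dec: "Cs (Suc i) \<subseteq> Cs i" for i by (auto simp: CsS)
  have d0: "fv.dim (Cs 0) = k" using dimC Cs0 by simp
  have d1: "fv.dim (Cs 1) = k - 1" using dim1 by (simp add: CsS Cs0)
  have grass: "fv.dim (Cs (Suc (Suc j))) + fv.dim (Cs j) \<ge> 2 * fv.dim (Cs (Suc j))" for j
  proof -
    let ?S = "Cs (Suc j)" and ?T = "Cpow q n s (Cs (Suc j))"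
    have e: "fv.dim {x + y |x y. x \<in> ?S \<and> y \<in> ?T} + fv.dim (?S \<inter> ?T) = fv.dim ?S + fv.dim ?T"
      by (rule ffv.dim_sums_Int[OF Cs_sub Cpow_subspace[OF Cs_sub]])
    have S1: "?S \<subseteq> Cpow q n s (Cs j)" unfolding CsS by (rule Int_lower2)
    have T1: "?T \<subseteq> Cpow q n s (Cs j)" unfolding Cpow_def by (rule image_mono[OF Cs_dec])
    have sp: "fv.subspace (Cpow q n s (Cs j))" by (rule Cpow_subspace[OF Cs_sub])
    have sumsub: "{x + y |x y. x \<in> ?S \<and> y \<in> ?T} \<subseteq> Cpow q n s (Cs j)"
    proof
      fix z assume "z \<in> {x + y |x y. x \<in> ?S \<and> y \<in> ?T}"
      then obtain x y where xy: "z = x + y" "x \<in> ?S" "y \<in> ?T" by blast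
      have "x \<in> Cpow q n s (Cs j)" using xy(2) S1 by (rule subsetD[rotated])
      moreover have "y \<in> Cpow q n s (Cs j)" using xy(3) T1 by (rule subsetD[rotated])
      ultimately show "z \<in> Cpow q n s (Cs j)" unfolding xy(1) by (rule fv.subspace_add[OF sp])
    qed
    have "fv.dim {x + y |x y. x \<in> ?S \<and> y \<in> ?T} \<le> fv.dim (Cpow q n s (Cs j))"
      by (rule ffv.dim_subset[OF sumsub])
    also have "fv.dim (Cpow q n s (Cs j)) = fv.dim (Cs j)" by (rule fpow_dim)
    finally have le: "fv.dim {x + y |x y. x \<in> ?S \<and> y \<in> ?T} \<le> fv.dim (Cs j)" .
    have T2: "fv.dim ?T = fv.dim ?S" by (rule fpow_dim)
    have I2: "?S \<inter> ?T = Cs (Suc (Suc j))" by (rule CsS[symmetric])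
    from e[unfolded I2 T2] le show ?thesis by linarith
  qed
  have dims: "i \<le> k - 1 \<Longrightarrow> fv.dim (Cs i) = k - i" for i
  proof (induction i rule: less_induct)
    case (less i)
    show ?case
    proof (cases "i \<le> 1")
      case True
      then have "i = 0 \<or> i = 1" by auto
      then show ?thesis using d0 d1 by auto
    next
      case False
      define j where "j = i - 2"
      have i: "i = Suc (Suc j)" using False unfolding j_def by simp
      have ik: "Suc (Suc j) \<le> k - 1" using less.prems i by simp
      have dj: "fv.dim (Cs j) = k - j" using less.IH[of j] i ik by simp
      have dsj: "fv.dim (Cs (Suc j)) = k - Suc j" using less.IH[of "Suc j"] i ik by simp
      have le: "fv.dim (Cs (Suc (Suc j))) \<le> fv.dim (Cs (Suc j))"
        by (rule ffv.dim_subset[OF Cs_dec])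
      have ge: "fv.dim (Cs (Suc (Suc j))) + fv.dim (Cs j) \<ge> 2 * fv.dim (Cs (Suc j))" by (rule grass)
      have ne: "fv.dim (Cs (Suc (Suc j))) \<noteq> fv.dim (Cs (Suc j))"
      proof
        assume eq: "fv.dim (Cs (Suc (Suc j))) = fv.dim (Cs (Suc j))"
        have "Cs (Suc (Suc j)) = Cs (Suc j)"
          by (rule ffv.subspace_dim_equal[OF Cs_sub Cs_sub Cs_dec]) (simp add: eq)
        then have sub: "Cs (Suc j) \<subseteq> Cpow q n s (Cs (Suc j))" using CsS[of "Suc j"] by blast
        have cl: "\<forall>v\<in>Cs (Suc j). fpow q n (- s) v \<in> Cs (Suc j)"
        proof
          fix v assume "v \<in> Cs (Suc j)"
          then obtain h where h: "h \<in> Cs (Suc j)" "v = fpow q n s h" using sub unfolding Cpow_def by blast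
          have "fpow q n (- s) v = h" unfolding h(2) fpow_comp by simp
          then show "fpow q n (- s) v \<in> Cs (Suc j)" using h(1) by simp
        qed
        have "fv.dim (Cs (Suc j)) \<noteq> 0" using dsj ik by simp
        then have "\<not> Cs (Suc j) \<subseteq> {0}" using ffv.dim_eq_0 by simp
        then obtain w where w: "w \<in> Cs (Suc j)" "w \<noteq> 0" by blast
        have g': "gcd (- s) (int n) = 1" using gs by simp
        show False
          by (rule no_fixed[OF CL CU Cs_sub Cs_C w cl g'])
      qed
      have "fv.dim (Cs (Suc (Suc j))) = k - Suc (Suc j)" using le ge ne dsj dj ik by linarith
      then show ?thesis using i by simp
    qed
  qed
  have dk: "fv.dim (Cs (k - 1)) = 1" using dims[of "k - 1"] k1 by simp
  have "\<not> Cs (k - 1) \<subseteq> {0}"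
  proof
    assume "Cs (k - 1) \<subseteq> {0}"
    then have "fv.dim (Cs (k - 1)) = 0" by (rule ffv.dim_eq_0[THEN iffD2])
    then show False using dk by linarith
  qed
  then obtain g where g: "g \<in> Cs (k - 1)" "g \<noteq> 0" by blast
  have bk: "\<forall>g\<in>Cs i. \<forall>j\<le>i. fpow q n (- s * int j) g \<in> C" for i
  proof (induction i)
    case 0 then show ?case using Cs0 by simp
  next
    case (Suc i)
    show ?case
    proof (intro ballI allI impI)
      fix g j assume g: "g \<in> Cs (Suc i)" and j: "j \<le> Suc i"
      show "fpow q n (- s * int j) g \<in> C"
      proof (cases "j \<le> i")
        case True then show ?thesis using Suc g Cs_dec by blast
      next
        case False
        then have j: "j = Suc i" using j by simp
        obtain h where h: "h \<in> Cs i" "g = fpow q n s h" using g unfolding CsS Cpow_def by blast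
        have "fpow q n (- s * int j) g = fpow q n (- s * int i) h"
          using h j by (simp add: fpow_comp algebra_simps)
        then show ?thesis using Suc h by auto
      qed
    qed
  qed
  define p where "p = fpow q n (- s * int (k - 1)) g"
  have pexp: "fpow q n (s * int j) p = fpow q n (- s * int (k - 1 - j)) g" if "j \<le> k - 1" for j
  proof -
    have e: "int (k - 1 - j) = int (k - 1) - int j" using that by simp
    have "s * int j + - s * int (k - 1) = - s * int (k - 1 - j)" unfolding e by (simp add: algebra_simps)
    then show ?thesis by (simp add: p_def fpow_comp)
  qed
  have pC: "fpow q n (s * int j) p \<in> C" if "j < k" for j
  proof -
    have j1: "j \<le> k - 1" using that by simp
    have "k - 1 - j \<le> k - 1" by simp
    then have "fpow q n (- s * int (k - 1 - j)) g \<in> C" using bk[of "k - 1"] g(1) by blast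
    then show ?thesis unfolding pexp[OF j1] .
  qed
  have p0: "p \<noteq> 0"
  proof
    assume "p = 0"
    then have "fpow q n (s * int (k - 1)) p = 0" by simp
    then show False using pexp[of "k - 1"] g by simp
  qed
  have pL: "p \<in> Lnq q n" using pC[of 0] k1 CL by auto
  define S where "S m = {fpow q n (s * int j) p | j. j < m}" for m
  have S_Suc: "S (Suc m) = insert (fpow q n (s * int m) p) (S m)" for m
    by (auto simp: S_def less_Suc_eq)
  have S_C: "m \<le> k \<Longrightarrow> S m \<subseteq> C" for m using pC by (auto simp: S_def)
  have ind: "m \<le> k \<Longrightarrow> fv.independent (S m) \<and> card (S m) = m \<and> finite (S m)" for m
  proof (induction m)
    case 0 then show ?case by (simp add: S_def fv.independent_empty)
  next
    case (Suc m)
    let ?v = "fpow q n (s * int m) p"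
    have notin: "?v \<notin> fv.span (S m)"
    proof
      assume vin: "?v \<in> fv.span (S m)"
      show False
      proof (cases m)
        case 0 then show False using vin p0 by (simp add: S_def)
      next
        case (Suc m')
        have pin: "p \<in> fv.span (S m)"
          using Suc by (intro fv.span_base) (auto simp: S_def intro!: exI[of _ 0])
        have WC: "fv.span (S m) \<subseteq> C"
          using S_C[of m] Suc.prems by (intro fv.span_minimal Csub) auto
        have img: "fpow q n s ` S m \<subseteq> fv.span (S m)"
        proof
          fix u assume "u \<in> fpow q n s ` S m"
          then obtain j where j: "j < m" "u = fpow q n s (fpow q n (s * int j) p)"
            unfolding S_def by blast
          then have u: "u = fpow q n (s * int (Suc j)) p" by (simp add: fpow_comp algebra_simps)
          show "u \<in> fv.span (S m)"
          proof (cases "Suc j < m")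
            case True
            then have "u \<in> S m" unfolding S_def u by blast
            then show ?thesis by (rule fv.span_base)
          next
            case False then have "Suc j = m" using j by simp
            then show ?thesis using u vin by simp
          qed
        qed
        have cl: "\<forall>u\<in>fv.span (S m). fpow q n s u \<in> fv.span (S m)"
        proof
          fix u assume "u \<in> fv.span (S m)"
          then have "fpow q n s u \<in> fv.span (fpow q n s ` S m)" using fpow_span by blast
          also have "\<dots> \<subseteq> fv.span (S m)"
            using img by (intro fv.span_minimal) auto
          finally show "fpow q n s u \<in> fv.span (S m)" .
        qed
        show False
          by (rule no_fixed[OF CL CU fv.subspace_span WC pin p0 cl gs])
      qed
    qed
    have IH: "fv.independent (S m)" "card (S m) = m" "finite (S m)" using Suc by auto
    have "?v \<notin> S m" using notin fv.span_base by blast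
    then show ?case using IH notin by (simp add: S_Suc fv.independent_insertI)
  qed
  have span_eq: "C = fv.span (S k)"
  proof
    have iS: "fv.independent (S k)" and cS: "card (S k) = k" and fS: "finite (S k)"
      using ind[OF order_refl] by auto
    have "fv.independent (S k) = (C \<subseteq> fv.span (S k))"
      by (rule ffv.card_eq_dim[OF S_C[OF order_refl]]) (simp_all only: cS dimC fS)
    then show "C \<subseteq> fv.span (S k)" using iS by blast
    show "fv.span (S k) \<subseteq> C" by (rule fv.span_minimal[OF S_C[OF order_refl] Csub])
  qed
  show ?thesis
  proof (intro bexI conjI impI)
    show "C = fv.span {fpow q n (s * int j) p | j. j < k}" by (rule span_eq[unfolded S_def])
    show "p \<in> Lnq q n" by (rule pL)
    assume "\<exists>f\<in>C. bij f"
    then obtain f where f: "f \<in> C" "bij f" by blast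
    show bp: "bij p"
    proof (rule ccontr)
      assume nb: "\<not> bij p"
      have "\<not> inj p"
      proof
        assume "inj p"
        then have "surj p" by (rule finite_UNIV_inj_surj[OF finite_UNIV])
        with \<open>inj p\<close> have "bij p" by (rule bijI)
        with nb show False by contradiction
      qed
      then obtain x y where xy: "x \<noteq> y" "p x = p y" unfolding inj_def by blast
      let ?Z = "{h :: 'a \<Rightarrow> 'a. h x = h y}"
      have Zs: "fv.subspace ?Z" unfolding fv.subspace_def fscale_def by simp
      have SZ: "S k \<subseteq> ?Z"
      proof
        fix u assume "u \<in> S k"
        then obtain j where u: "u = fpow q n (s * int j) p" unfolding S_def by blast
        have "u x = u y" unfolding u fpow_def using xy(2) by simp
        then show "u \<in> ?Z" by simp
      qed
      have CZ: "C \<subseteq> ?Z" unfolding span_eq by (rule fv.span_minimal[OF SZ Zs])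
      then have "f x = f y" using f(1) by blast
      then show False using f(2) xy(1) unfolding bij_def inj_def by blast
    qed
    show "code_equiv q n C (Gks q n k s)"
      unfolding code_equiv_def
    proof (intro exI conjI)
      show "(id :: 'a \<Rightarrow> 'a) \<in> Lnq q n" by (rule Lnq_id)
      show "inv p \<in> Lnq q n" by (rule Lnq_inv[OF pL bp])
      show "bij (id :: 'a \<Rightarrow> 'a)" by simp
      show "bij (inv p)" using bp by (rule bij_imp_bij_inv)
      show "field_aut (id :: 'a \<Rightarrow> 'a)" by (simp add: field_aut_def)
      let ?R = "\<lambda>f :: 'a \<Rightarrow> 'a. f \<circ> inv p"
      have set_eq: "{id \<circ> lin_eval q n (id \<circ> a) \<circ> inv p |a. lin_eval q n a \<in> C} = ?R ` C"
      proof
        show "{id \<circ> lin_eval q n (id \<circ> a) \<circ> inv p |a. lin_eval q n a \<in> C} \<subseteq> ?R ` C" by auto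
        show "?R ` C \<subseteq> {id \<circ> lin_eval q n (id \<circ> a) \<circ> inv p |a. lin_eval q n a \<in> C}"
        proof
          fix u assume "u \<in> ?R ` C"
          then obtain h where h: "h \<in> C" "u = h \<circ> inv p" by blast
          then obtain a where a: "h = lin_eval q n a" using CL unfolding Lnq_def by blast
          show "u \<in> {id \<circ> lin_eval q n (id \<circ> a) \<circ> inv p |a. lin_eval q n a \<in> C}"
            using h a by auto
        qed
      qed
      have "?R ` C = fv.span (?R ` S k)"
        unfolding span_eq
        by (rule semilin_span_image[where \<sigma> = id]) (auto simp: fun_eq_iff fscale_def)
      also have "?R ` S k = {(\<lambda>x. qp q n (s * int j) x) | j. j < k}"
      proof -
        have eq: "fpow q n (s * int j) p \<circ> inv p = (\<lambda>x. qp q n (s * int j) x)" for j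
          using bp by (simp add: fun_eq_iff fpow_def bij_is_surj surj_f_inv_f)
        show ?thesis
        proof (rule set_eqI, rule iffI)
          fix u assume "u \<in> ?R ` S k"
          then obtain j where j: "j < k" "u = fpow q n (s * int j) p \<circ> inv p" unfolding S_def by blast
          then have "u = (\<lambda>x. qp q n (s * int j) x)" using eq by simp
          then show "u \<in> {(\<lambda>x. qp q n (s * int j) x) | j. j < k}" using j(1) by blast
        next
          fix u :: "'a \<Rightarrow> 'a" assume "u \<in> {(\<lambda>x. qp q n (s * int j) x) | j. j < k}"
          then obtain j where j: "j < k" "u = (\<lambda>x. qp q n (s * int j) x)" by blast
          then have "u = ?R (fpow q n (s * int j) p)" using eq by simp
          moreover have "fpow q n (s * int j) p \<in> S k" using j(1) unfolding S_def by blast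
          ultimately show "u \<in> ?R ` S k" by blast
        qed
      qed
      finally have X: "?R ` C = fv.span {(\<lambda>x. qp q n (s * int j) x) | j. j < k}" .
      show "Gks q n k s = {id \<circ> lin_eval q n (id \<circ> a) \<circ> inv p |a. lin_eval q n a \<in> C}"
        unfolding set_eq Gks_def by (rule X[symmetric])
    qed
  qed
qed


end
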